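(* Let $p$ be a prime, $q=p^r$, $m,n\ge1$, and $0\le l\le r-1$. Let $\mathscr{C}\subseteq\mathrm{GF}(q^m)^n$ be a scalable code. Then $\mathrm{Tr}(\mathscr{C})$ is self-orthogonal w.r.t. the Hermitian-type product $h_l(x,y)=\sum_{i=1}^n x_iy_i^{p^l}$ on $\mathrm{GF}(q)^n$ if and only if $$\sum_{i=1}^n x_iy_i^{p^lq^k}=0$$ for all $x=(x_1,\ldots,x_n),y=(y_1,\ldots,y_n)\in\mathscr{C}$ and all $0\le k\le m-1$; i.e., if and only if $\mathscr{C}$ is self-orthogonal w.r.t. each of the forms $f_{kl}(x,y)=\sum_{i=1}^n x_iy_i^{p^lq^k}$, $0\le k\le m-1$.
   Context: $\mathrm{Tr}:\mathrm{GF}(q^m)\to\mathrm{GF}(q)$, $\mathrm{Tr}(a)=\sum_{i=0}^{m-1}a^{q^i}$. A code $\mathscr{C}\subseteq\mathrm{GF}(q^m)^n$ is scalable if $x\in\mathscr{C}\Rightarrow\alpha x\in\mathscr{C}$ for all $\alpha\in\mathrm{GF}(q^m)$. $\mathrm{Tr}(\mathscr{C})=\{(\mathrm{Tr}(x_1),\ldots,\mathrm{Tr}(x_n)):x\in\mathscr{C}\}$. A code $D$ is self-orthogonal w.r.t. a form $g$ if $g(x,y)=0$ for all $x,y\in D$. *)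

theory Defs
  imports "HOL-Computational_Algebra.Primes"
begin

text \<open>The field GF(q^m) is modelled as a finite field type 'a with CARD('a) = q^m;
  GF(q) is its subfield of elements fixed by the q-th power map.
  Vectors of length n are functions from a finite index type 'n (n = CARD('n)).\<close>

definition trace :: "nat \<Rightarrow> nat \<Rightarrow> 'a::field \<Rightarrow> 'a" where
  "trace q m a = (\<Sum>i<m. a ^ (q ^ i))"

definition scalable :: "('n \<Rightarrow> 'a::field) set \<Rightarrow> bool" where
  "scalable C \<longleftrightarrow> (\<forall>x\<in>C. \<forall>\<alpha>::'a. (\<lambda>i. \<alpha> * x i) \<in> C)"

definition trace_code :: "nat \<Rightarrow> nat \<Rightarrow> ('n \<Rightarrow> 'a::field) set \<Rightarrow> ('n \<Rightarrow> 'a) set" where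
  "trace_code q m C = (\<lambda>x. \<lambda>i. trace q m (x i)) ` C"

definition self_orthogonal :: "(('n \<Rightarrow> 'a) \<Rightarrow> ('n \<Rightarrow> 'a) \<Rightarrow> 'b::zero) \<Rightarrow> ('n \<Rightarrow> 'a) set \<Rightarrow> bool" where
  "self_orthogonal g D \<longleftrightarrow> (\<forall>x\<in>D. \<forall>y\<in>D. g x y = 0)"

definition herm_form :: "nat \<Rightarrow> nat \<Rightarrow> ('n::finite \<Rightarrow> 'a::field) \<Rightarrow> ('n \<Rightarrow> 'a) \<Rightarrow> 'a" where
  "herm_form p l x y = (\<Sum>i\<in>UNIV. x i * y i ^ (p ^ l))"

definition f_form :: "nat \<Rightarrow> nat \<Rightarrow> nat \<Rightarrow> nat \<Rightarrow> ('n::finite \<Rightarrow> 'a::field) \<Rightarrow> ('n \<Rightarrow> 'a) \<Rightarrow> 'a" where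
  "f_form p q k l x y = (\<Sum>i\<in>UNIV. x i * y i ^ (p ^ l * q ^ k))"

end

theory Submission
  imports Defs "HOL-Computational_Algebra.Polynomial"
begin

lemma card_times_zero:
  fixes a :: "'a::{ring_1,finite}"
  shows "of_nat (card (UNIV::'a set)) * a = 0"
proof -
  have "(\<Sum>x\<in>UNIV. x + a) = (\<Sum>x\<in>UNIV. (x::'a))"
    by (rule sum.reindex_bij_witness[where i="\<lambda>x. x - a" and j="\<lambda>x. x + a"]) auto
  hence "(\<Sum>x\<in>UNIV. x) + of_nat (card (UNIV::'a set)) * a = (\<Sum>x\<in>UNIV. (x::'a))"
    by (simp add: sum.distrib)
  thus ?thesis by simp
qed

lemma char_p:
  assumes "card (UNIV::'a::{field,finite} set) = p ^ N" "N \<ge> 1"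
  shows "(of_nat p :: 'a) = 0"
proof -
  have "(of_nat (card (UNIV::'a set)) :: 'a) = 0" using card_times_zero[of "1::'a"] by simp
  hence "(of_nat p :: 'a) ^ N = 0" using assms by (simp add: of_nat_power)
  thus ?thesis by simp
qed

lemma frob_add:
  fixes a b :: "'a::field"
  assumes p: "prime p" and c: "(of_nat p :: 'a) = 0"
  shows "(a + b) ^ p = a ^ p + b ^ p"
proof -
  have "(a + b) ^ p = (\<Sum>k\<le>p. of_nat (p choose k) * a ^ k * b ^ (p - k))"
    by (simp add: binomial_ring)
  also have "\<dots> = (\<Sum>k\<in>{0,p}. of_nat (p choose k) * a ^ k * b ^ (p - k))"
  proof (rule sum.mono_neutral_right)
    show "\<forall>k\<in>{..p} - {0, p}. of_nat (p choose k) * a ^ k * b ^ (p - k) = 0"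
    proof
      fix k assume k: "k \<in> {..p} - {0, p}"
      have "p dvd (p choose k)" using k p prime_gt_0_nat by (intro dvd_choose_prime) auto
      then obtain t where "p choose k = p * t" by auto
      hence "(of_nat (p choose k) :: 'a) = 0" using c by simp
      thus "of_nat (p choose k) * a ^ k * b ^ (p - k) = 0" by simp
    qed
  qed auto
  also have "\<dots> = a ^ p + b ^ p" using prime_gt_0_nat[OF p] by (simp add: add.commute)
  finally show ?thesis .
qed

lemma frob_add_pow:
  fixes a b :: "'a::field"
  assumes p: "prime p" and c: "(of_nat p :: 'a) = 0"
  shows "(a + b) ^ (p ^ e) = a ^ (p ^ e) + b ^ (p ^ e)"
proof (induction e)
  case (Suc e)
  have "(a + b) ^ (p ^ Suc e) = ((a + b) ^ (p ^ e)) ^ p"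
    by (simp add: power_mult[symmetric] mult.commute)
  also have "\<dots> = (a ^ (p ^ e)) ^ p + (b ^ (p ^ e)) ^ p" using Suc frob_add[OF p c] by simp
  also have "\<dots> = a ^ (p ^ Suc e) + b ^ (p ^ Suc e)"
    by (simp add: power_mult[symmetric] mult.commute)
  finally show ?case .
qed simp

lemma frob_sum_pow:
  fixes f :: "'b \<Rightarrow> 'a::field"
  assumes p: "prime p" and c: "(of_nat p :: 'a) = 0"
  shows "(\<Sum>i\<in>A. f i) ^ (p ^ e) = (\<Sum>i\<in>A. f i ^ (p ^ e))"
proof (induction A rule: infinite_finite_induct)
  case (insert x F)
  thus ?case using frob_add_pow[OF p c] by simp
qed (use p prime_gt_0_nat in auto)

lemma fermat_field:
  fixes a :: "'a::{field,finite}"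
  shows "a ^ card (UNIV::'a set) = a"
proof (cases "a = 0")
  case True thus ?thesis by (simp add: finite_UNIV_card_ge_0)
next
  case False
  let ?U = "UNIV - {0::'a}"
  have "(\<Prod>x\<in>?U. a * x) = (\<Prod>x\<in>?U. x)"
    by (rule prod.reindex_bij_witness[where i="\<lambda>x. x / a" and j="\<lambda>x. a * x"]) (use False in auto)
  hence "a ^ card ?U * (\<Prod>x\<in>?U. x) = (\<Prod>x\<in>?U. x)"
    by (simp add: prod.distrib)
  moreover have "(\<Prod>x\<in>?U. x) \<noteq> 0" by simp
  ultimately have "a ^ card ?U = 1" by simp
  moreover have "card (UNIV::'a set) = Suc (card ?U)"
  proof -
    have "card ?U = card (UNIV::'a set) - 1" by (simp add: card_Diff_singleton)
    moreover have "card (UNIV::'a set) > 0" by (simp add: finite_UNIV_card_ge_0)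
    ultimately show ?thesis by simp
  qed
  ultimately show ?thesis by (metis power_Suc mult_1_right)
qed

lemma poly_vanish:
  fixes c :: "nat \<Rightarrow> 'a::{field,finite}"
  assumes inj: "inj_on e {..<m}" and lt: "\<And>k. k < m \<Longrightarrow> e k < card (UNIV::'a set)"
    and z: "\<And>\<beta>. (\<Sum>k<m. c k * \<beta> ^ e k) = 0"
    and j: "j < m"
  shows "c j = 0"
proof -
  define P where "P = (\<Sum>k<m. monom (c k) (e k))"
  have ev: "poly P \<beta> = 0" for \<beta> using z[of \<beta>] by (simp add: P_def poly_sum poly_monom)
  have co: "coeff P (e j) = c j"
  proof -
    have "coeff P (e j) = (\<Sum>k<m. if e k = e j then c k else 0)"
      by (simp add: P_def coeff_sum)
    also have "\<dots> = (\<Sum>k\<in>{j}. c k)"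
      by (rule sum.mono_neutral_cong_right) (use j inj in \<open>auto simp: inj_on_def\<close>)
    finally show ?thesis by simp
  qed
  show ?thesis
  proof (rule ccontr)
    assume "c j \<noteq> 0"
    hence "P \<noteq> 0" using co by auto
    hence "card {x. poly P x = 0} \<le> degree P" by (rule card_poly_roots_bound)
    moreover have "{x. poly P x = 0} = UNIV" using ev by auto
    moreover have "degree P < card (UNIV::'a set)"
    proof -
      have "m > 0" using j by simp
      have "degree P \<le> Max (e ` {..<m})" unfolding P_def
        by (rule degree_sum_le) (auto intro: order.trans[OF degree_monom_le])
      also have "\<dots> < card (UNIV::'a set)" using lt \<open>m > 0\<close> by (subst Max_less_iff) auto
      finally show ?thesis .
    qed
    ultimately show False by simp
  qed
qed


lemma fixed_pow:
  fixes c :: "'a::field"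
  assumes "c ^ q = c" shows "c ^ (q ^ i) = c"
proof (induction i)
  case (Suc i)
  have "c ^ (q ^ Suc i) = (c ^ (q ^ i)) ^ q" by (simp add: power_mult[symmetric] mult.commute)
  thus ?case using Suc assms by simp
qed simp

locale ffield =
  fixes p r q m :: nat and dummy :: "'a::{field,finite} itself"
  assumes p: "prime p" and c: "(of_nat p :: 'a) = 0" and q: "q = p ^ r"
    and ferm: "\<And>a::'a. a ^ (q ^ m) = a" and m: "m \<ge> 1"
begin

lemma sum_powq: "(\<Sum>i\<in>A. f i :: 'a) ^ (q ^ k) = (\<Sum>i\<in>A. f i ^ (q ^ k))"
  using frob_sum_pow[OF p c, of f A "r * k"] by (simp add: q power_mult)

lemma trace_sum: "trace q m (\<Sum>i\<in>A. f i :: 'a) = (\<Sum>i\<in>A. trace q m (f i))"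
  unfolding trace_def by (simp add: sum_powq sum.swap[of _ "{..<m}"])

lemma trace_lin: assumes "(d::'a) ^ q = d" shows "trace q m (d * a) = d * trace q m a"
  unfolding trace_def by (simp add: power_mult_distrib fixed_pow[OF assms] sum_distrib_left)

lemma trace_zero: "trace q m (0::'a) = 0"
proof -
  have "q ^ i > 0" for i using p prime_gt_0_nat q by simp
  thus ?thesis unfolding trace_def by (simp add: zero_power)
qed

lemma trace_fixed: "trace q m (a::'a) ^ q = trace q m a"
proof -
  obtain m' where m': "m = Suc m'" using m by (cases m) auto
  have "trace q m a ^ q = (\<Sum>i<m. a ^ (q ^ i)) ^ (q ^ 1)" by (simp add: trace_def)
  also have "\<dots> = (\<Sum>i<m. (a ^ (q ^ i)) ^ (q ^ 1))"
    by (rule sum_powq)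
  also have "\<dots> = (\<Sum>i<m. a ^ (q ^ Suc i))"
    by (simp add: power_mult[symmetric] mult.commute)
  also have "\<dots> = (\<Sum>i<m'. a ^ (q ^ Suc i)) + a ^ (q ^ m)" by (simp add: m')
  also have "\<dots> = (\<Sum>i<m'. a ^ (q ^ Suc i)) + a ^ (q ^ 0)" using ferm by simp
  also have "\<dots> = (\<Sum>i<m. a ^ (q ^ i))" unfolding m' sum.lessThan_Suc_shift by (simp only: add.commute)
  finally show ?thesis by (simp add: trace_def)
qed

lemma key:
  fixes x y :: "'n::finite \<Rightarrow> 'a"
  shows "herm_form p l (\<lambda>i. trace q m (x i)) (\<lambda>i. trace q m (y i)) =
         trace q m (\<Sum>k<m. f_form p q k l x y)"
proof -
  have fx: "(trace q m (y i) ^ (p ^ l)) ^ q = trace q m (y i) ^ (p ^ l)" for i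
    by (metis power_mult mult.commute trace_fixed)
  have ty: "trace q m (y i) ^ (p ^ l) = (\<Sum>k<m. y i ^ (p ^ l * q ^ k))" for i
    unfolding trace_def by (simp add: frob_sum_pow[OF p c] power_mult[symmetric] mult.commute)
  have "herm_form p l (\<lambda>i. trace q m (x i)) (\<lambda>i. trace q m (y i)) =
        (\<Sum>i\<in>UNIV. trace q m (y i) ^ (p ^ l) * trace q m (x i))"
    by (simp add: herm_form_def mult.commute)
  also have "\<dots> = (\<Sum>i\<in>UNIV. trace q m (trace q m (y i) ^ (p ^ l) * x i))"
    by (simp add: trace_lin[OF fx])
  also have "\<dots> = trace q m (\<Sum>i\<in>UNIV. trace q m (y i) ^ (p ^ l) * x i)"
    by (simp add: trace_sum)
  also have "(\<Sum>i\<in>UNIV. trace q m (y i) ^ (p ^ l) * x i) = (\<Sum>k<m. f_form p q k l x y)"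
  proof -
    have "(\<Sum>i\<in>UNIV. trace q m (y i) ^ (p ^ l) * x i) = (\<Sum>i\<in>UNIV. x i * (\<Sum>k<m. y i ^ (p ^ l * q ^ k)))"
      by (simp add: ty mult.commute)
    also have "\<dots> = (\<Sum>i\<in>UNIV. \<Sum>k<m. x i * y i ^ (p ^ l * q ^ k))"
      by (simp add: sum_distrib_left)
    also have "\<dots> = (\<Sum>k<m. f_form p q k l x y)"
      unfolding f_form_def by (rule sum.swap)
    finally show ?thesis .
  qed
  finally show ?thesis .
qed

end


theorem theorem7:
  fixes C :: "('n::finite \<Rightarrow> 'a::{field,finite}) set"
    and p r q m l :: nat
  assumes "prime p" and "q = p ^ r" and "m \<ge> 1" and "l \<le> r - 1" and "r \<ge> 1"
    and "card (UNIV :: 'a set) = q ^ m"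
    and "scalable C"
  shows "self_orthogonal (herm_form p l) (trace_code q m C) \<longleftrightarrow>
         (\<forall>k<m. self_orthogonal (f_form p q k l) C)"
proof -
  note pp = assms(1)
  have p2: "p \<ge> 2" using prime_ge_2_nat[OF pp] .
  have q2: "q \<ge> 2" using assms(2,5) p2
    by (metis order.trans power_increasing power_one_right le_numeral_extra(2) order_less_imp_le order_le_less_trans one_less_numeral_iff semiring_norm(76) not_less) 
  have cardp: "card (UNIV :: 'a set) = p ^ (r * m)" using assms(2,6) by (simp add: power_mult)
  have rm: "r * m \<ge> 1" using assms(3,5) by simp
  have c: "(of_nat p :: 'a) = 0" by (rule char_p[OF cardp rm])
  have ferm: "\<And>a::'a. a ^ (q ^ m) = a" using fermat_field assms(6) by metis
  interpret F: ffield p r q m "TYPE('a)"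
    by unfold_locales (use pp c assms(2,3) ferm in auto)
  have injq: "inj_on (\<lambda>k. q ^ k) A" for A
    using q2 by (auto simp: inj_on_def power_inject_exp)
  have tnz: "\<exists>z::'a. trace q m z \<noteq> 0"
  proof (rule ccontr)
    assume "\<not> ?thesis"
    hence Z: "\<And>\<beta>::'a. (\<Sum>k<m. (\<lambda>_. 1) k * \<beta> ^ (q ^ k)) = 0" by (simp add: trace_def)
    have "(\<lambda>_. 1::'a) 0 = 0"
      by (rule poly_vanish[where e="\<lambda>k. q ^ k" and j=0, OF _ _ Z])
         (use injq assms(3,6) q2 in \<open>auto intro: power_strict_increasing\<close>)
    thus False by simp
  qed
  have nondeg: "s = 0" if h: "\<And>\<alpha>. trace q m (\<alpha> * s) = (0::'a)" for s
  proof (rule ccontr)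
    assume s: "s \<noteq> 0"
    obtain z :: 'a where z: "trace q m z \<noteq> 0" using tnz by blast
    have "trace q m ((z / s) * s) = 0" by (rule h)
    thus False using s z by simp
  qed
  show ?thesis
  proof
    assume H: "self_orthogonal (herm_form p l) (trace_code q m C)"
    show "\<forall>k<m. self_orthogonal (f_form p q k l) C"
    proof (intro allI impI)
      fix k assume k: "k < m"
      show "self_orthogonal (f_form p q k l) C"
        unfolding self_orthogonal_def
      proof (intro ballI)
        fix x y assume x: "x \<in> C" and y: "y \<in> C"
        have S: "trace q m (\<Sum>k<m. f_form p q k l (\<lambda>i. \<alpha> * x i) (\<lambda>i. \<beta> * y i)) = 0" for \<alpha> \<beta>
        proof -
          have "(\<lambda>i. \<alpha> * x i) \<in> C" "(\<lambda>i. \<beta> * y i) \<in> C"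
            using assms(7) x y by (auto simp: scalable_def)
          hence "(\<lambda>i. trace q m (\<alpha> * x i)) \<in> trace_code q m C"
                "(\<lambda>i. trace q m (\<beta> * y i)) \<in> trace_code q m C"
            unfolding trace_code_def by (auto intro!: image_eqI)
          hence "herm_form p l (\<lambda>i. trace q m (\<alpha> * x i)) (\<lambda>i. trace q m (\<beta> * y i)) = 0"
            using H unfolding self_orthogonal_def by blast
          thus ?thesis using F.key[of l "\<lambda>i. \<alpha> * x i" "\<lambda>i. \<beta> * y i"] by simp
        qed
        have fscale: "f_form p q k l (\<lambda>i. \<alpha> * x i) (\<lambda>i. \<beta> * y i) =
            \<alpha> * (\<beta> ^ (p ^ l * q ^ k) * f_form p q k l x y)" for k \<alpha> \<beta>
          by (simp add: f_form_def power_mult_distrib sum_distrib_left mult_ac)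
        have Z: "(\<Sum>k<m. f_form p q k l x y * \<beta> ^ (p ^ l * q ^ k)) = 0" for \<beta>
        proof (rule nondeg)
          fix \<alpha>
          show "trace q m (\<alpha> * (\<Sum>k<m. f_form p q k l x y * \<beta> ^ (p ^ l * q ^ k))) = 0"
            using S[of \<alpha> \<beta>] by (simp add: fscale sum_distrib_left mult_ac)
        qed
        have plq: "p ^ l < q" using assms(2,4,5) p2 by (auto intro: power_strict_increasing)
        show "f_form p q k l x y = 0"
        proof (rule poly_vanish[where e="\<lambda>k. p ^ l * q ^ k", OF _ _ Z k])
          show "inj_on (\<lambda>k. p ^ l * q ^ k) {..<m}"
            using injq[of "{..<m}"] p2 by (auto simp: inj_on_def)
        next
          fix j assume j: "j < m"
          have "p ^ l * q ^ j < q * q ^ j" using plq q2 by simp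
          also have "\<dots> \<le> q ^ m" using j q2
            by (metis power_Suc power_increasing Suc_leI one_le_numeral order.trans)
          finally show "p ^ l * q ^ j < card (UNIV::'a set)" using assms(6) by simp
        qed
      qed
    qed
  next
    assume H: "\<forall>k<m. self_orthogonal (f_form p q k l) C"
    show "self_orthogonal (herm_form p l) (trace_code q m C)"
      unfolding self_orthogonal_def trace_code_def
    proof (intro ballI)
      fix u v assume "u \<in> (\<lambda>x i. trace q m (x i)) ` C" "v \<in> (\<lambda>x i. trace q m (x i)) ` C"
      then obtain x y where x: "x \<in> C" "u = (\<lambda>i. trace q m (x i))"
        and y: "y \<in> C" "v = (\<lambda>i. trace q m (y i))" by auto
      have "(\<Sum>k<m. f_form p q k l x y) = 0"
        using H x y unfolding self_orthogonal_def by simp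
      thus "herm_form p l u v = 0" using F.key[of l x y] F.trace_zero x y by simp
    qed
  qed
qed

end
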